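(* Let $f(x)=\frac1n\sum_{i=1}^n f_i(x)$ on $\mathbb{R}^d$, where each $f_i$ is convex and $L$-smooth, and let $\mathcal X^\star$ (assumed nonempty) be the set of minimizers of $f$. Consider the following algorithm (Acc-SVRG-G) with parameters $\tau_k\in(0,1)$, $p_k\in(0,1]$: set $z_0=\tilde x_0=x_0$, $\alpha_k=\frac{L\tau_k}{1-\tau_k}$, and for $k=0,1,\dots$: $y_k=\tau_kz_k+(1-\tau_k)\big(\tilde x_k-\frac1L\nabla f(\tilde x_k)\big)$; $z_{k+1}=\arg\min_x\{\langle\mathcal G_k,x\rangle+\frac{\alpha_k}{2}\|x-z_k\|^2\}$, where $\mathcal G_k=\nabla f_{i_k}(y_k)-\nabla f_{i_k}(\tilde x_k)+\nabla f(\tilde x_k)$ with $i_k$ sampled uniformly from $\{1,\dots,n\}$ independently of the past; $\tilde x_{k+1}=y_k$ with probability $p_k$ and $\tilde x_{k+1}=\tilde x_k$ with probability $1-p_k$. Then for every $k\ge0$ and every $x^\star\in\mathcal X^\star$, $$\frac{1-\tau_k}{\tau_k^2p_k}\mathbb E[f(\tilde x_{k+1})-f(x^\star)]+\frac L2\mathbb E\|z_{k+1}-x^\star\|^2+\frac{(1-\tau_k)^2}{2L\tau_k^2}\mathbb E\|\nabla f(\tilde x_k)\|^2\le\frac{(1-\tau_kp_k)(1-\tau_k)}{\tau_k^2p_k}\mathbb E[f(\tilde x_k)-f(x^\star)]+\frac L2\mathbb E\|z_k-x^\star\|^2,$$ where $\mathbb E$ is the total expectation.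
   Context: $L$-smooth means $\|\nabla f_i(x)-\nabla f_i(y)\|\le L\|x-y\|$ for all $x,y$; norms are Euclidean. *)

theory Defs
  imports "HOL-Analysis.Analysis" "HOL-Probability.Probability"
begin

definition fsum :: "nat \<Rightarrow> (nat \<Rightarrow> real ^ 'd \<Rightarrow> real) \<Rightarrow> real ^ 'd \<Rightarrow> real" where
  "fsum n fi x = (1 / real n) * (\<Sum>i<n. fi i x)"

definition gradf :: "nat \<Rightarrow> (nat \<Rightarrow> real ^ 'd \<Rightarrow> real ^ 'd) \<Rightarrow> real ^ 'd \<Rightarrow> real ^ 'd" where
  "gradf n g x = (1 / real n) *\<^sub>R (\<Sum>i<n. g i x)"

definition svrg_step ::
  "real \<Rightarrow> nat \<Rightarrow> (nat \<Rightarrow> real ^ 'd \<Rightarrow> real ^ 'd) \<Rightarrow> real \<Rightarrow>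
   ((real ^ 'd) \<times> (real ^ 'd)) \<Rightarrow> nat \<Rightarrow> bool \<Rightarrow> ((real ^ 'd) \<times> (real ^ 'd))" where
  "svrg_step L n g tau s i b =
     (let z = fst s; xt = snd s;
          y = tau *\<^sub>R z + (1 - tau) *\<^sub>R (xt - (1 / L) *\<^sub>R gradf n g xt);
          G = g i y - g i xt + gradf n g xt;
          alpha = L * tau / (1 - tau);
          z' = arg_min (\<lambda>x. G \<bullet> x + alpha / 2 * (norm (x - z))\<^sup>2) (\<lambda>_. True);
          xt' = (if b then y else xt)
      in (z', xt'))"

primrec svrg_dist ::
  "real \<Rightarrow> nat \<Rightarrow> (nat \<Rightarrow> real ^ 'd \<Rightarrow> real ^ 'd) \<Rightarrow> (nat \<Rightarrow> real) \<Rightarrow> (nat \<Rightarrow> real) \<Rightarrow>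
   real ^ 'd \<Rightarrow> nat \<Rightarrow> ((real ^ 'd) \<times> (real ^ 'd)) pmf" where
  "svrg_dist L n g tau p x0 0 = return_pmf (x0, x0)"
| "svrg_dist L n g tau p x0 (Suc k) =
     bind_pmf (svrg_dist L n g tau p x0 k) (\<lambda>s.
       bind_pmf (pmf_of_set {..<n}) (\<lambda>i.
         map_pmf (\<lambda>b. svrg_step L n g (tau k) s i b) (bernoulli_pmf (p k))))"

end

theory Submission
  imports Defs
begin

lemma line_deriv:
  fixes F :: "'a::real_inner \<Rightarrow> real"
  assumes "(F has_derivative (\<lambda>h. G \<bullet> h)) (at (y + t *\<^sub>R d))"
  shows "((\<lambda>t. F (y + t *\<^sub>R d)) has_real_derivative (G \<bullet> d)) (at t)"
proof -
  have l: "((\<lambda>t. y + t *\<^sub>R d) has_derivative (\<lambda>s. s *\<^sub>R d)) (at t)"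
    by (auto intro!: derivative_eq_intros)
  have "((\<lambda>t. F (y + t *\<^sub>R d)) has_derivative (\<lambda>s. G \<bullet> (s *\<^sub>R d))) (at t)"
    using has_derivative_compose[OF l assms] by simp
  moreover have "(\<lambda>s. G \<bullet> (s *\<^sub>R d)) = (\<lambda>s. (G \<bullet> d) * s)"
    by (auto simp: fun_eq_iff)
  ultimately show ?thesis by (simp add: has_field_derivative_def)
qed

lemma tangent:
  fixes F :: "'a::real_inner \<Rightarrow> real"
  assumes cv: "convex_on UNIV F" and d: "(F has_derivative (\<lambda>h. G \<bullet> h)) (at y)"
  shows "F y + G \<bullet> (x - y) \<le> F x"
proof -
  define \<phi> where "\<phi> = (\<lambda>t::real. F (y + t *\<^sub>R (x - y)))"
  have cphi: "convex_on UNIV \<phi>"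
  proof (rule convex_onI)
    fix t a b :: real assume "t > 0" "t < 1"
    have "y + ((1 - t) * a + t * b) *\<^sub>R (x - y) = (1 - t) *\<^sub>R (y + a *\<^sub>R (x - y)) + t *\<^sub>R (y + b *\<^sub>R (x - y))"
      by (simp add: algebra_simps)
    then show "\<phi> ((1 - t) *\<^sub>R a + t *\<^sub>R b) \<le> (1 - t) * \<phi> a + t * \<phi> b"
      unfolding \<phi>_def using convex_onD[OF cv, of t] \<open>t > 0\<close> \<open>t < 1\<close> by simp
  qed simp
  have "(\<phi> has_real_derivative (G \<bullet> (x - y))) (at 0)"
    unfolding \<phi>_def by (rule line_deriv) (use d in simp)
  then have "\<phi> 1 - \<phi> 0 \<ge> (G \<bullet> (x - y)) * (1 - 0)"
    by (intro convex_on_imp_above_tangent[OF cphi]) auto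
  then show ?thesis by (simp add: \<phi>_def)
qed

lemma descent:
  fixes F :: "'a::real_inner \<Rightarrow> real"
  assumes d: "\<And>x. (F has_derivative (\<lambda>h. Gr x \<bullet> h)) (at x)"
    and lip: "\<And>x y. norm (Gr x - Gr y) \<le> L * norm (x - y)"
  shows "F u \<le> F x + Gr x \<bullet> (u - x) + L / 2 * (norm (u - x))\<^sup>2"
proof -
  define dd where "dd = u - x"
  define k where "k = (\<lambda>t. F (x + t *\<^sub>R dd) - t * (Gr x \<bullet> dd) - L * t\<^sup>2 / 2 * (norm dd)\<^sup>2)"
  have "k 1 \<le> k 0"
  proof (rule DERIV_nonpos_imp_nonincreasing[of 0 1])
    fix t :: real assume t: "0 \<le> t" "t \<le> 1"
    have D: "(k has_real_derivative (Gr (x + t *\<^sub>R dd) \<bullet> dd - Gr x \<bullet> dd - L * t * (norm dd)\<^sup>2)) (at t)"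
      unfolding k_def
      by (rule derivative_eq_intros line_deriv d refl | simp)+
    have "Gr (x + t *\<^sub>R dd) \<bullet> dd - Gr x \<bullet> dd = (Gr (x + t *\<^sub>R dd) - Gr x) \<bullet> dd"
      by (simp add: inner_diff_left)
    also have "\<dots> \<le> norm (Gr (x + t *\<^sub>R dd) - Gr x) * norm dd"
      by (rule norm_cauchy_schwarz)
    also have "\<dots> \<le> L * norm (t *\<^sub>R dd) * norm dd"
      using lip[of "x + t *\<^sub>R dd" x] by (intro mult_right_mono) auto
    also have "\<dots> = L * t * (norm dd)\<^sup>2" using t by (simp add: power2_eq_square)
    finally show "\<exists>y. (k has_real_derivative y) (at t) \<and> y \<le> 0" using D by auto
  qed simp
  then show ?thesis unfolding k_def dd_def by simp
qed

lemma cocoercive: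
  fixes F :: "'a::real_inner \<Rightarrow> real"
  assumes d: "\<And>x. (F has_derivative (\<lambda>h. Gr x \<bullet> h)) (at x)"
    and lip: "\<And>x y. norm (Gr x - Gr y) \<le> L * norm (x - y)"
    and cv: "convex_on UNIV F" and L: "L > 0"
  shows "(norm (Gr x - Gr y))\<^sup>2 \<le> 2 * L * (F x - F y - Gr y \<bullet> (x - y))"
proof -
  define D where "D = Gr x - Gr y"
  define u where "u = x - (1 / L) *\<^sub>R D"
  have t: "F y + Gr y \<bullet> (u - y) \<le> F u" by (rule tangent[OF cv d])
  have de: "F u \<le> F x + Gr x \<bullet> (u - x) + L / 2 * (norm (u - x))\<^sup>2"
    by (rule descent[OF d lip])
  have e1: "Gr x \<bullet> (u - x) = - (1 / L) * (Gr x \<bullet> D)" by (simp add: u_def)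
  have e2: "(norm (u - x))\<^sup>2 = (norm D)\<^sup>2 / L\<^sup>2" using L
    by (simp add: u_def power2_eq_square divide_simps)
  have e3: "Gr y \<bullet> (u - y) = Gr y \<bullet> (x - y) - (1 / L) * (Gr y \<bullet> D)"
    by (simp add: u_def inner_diff_right algebra_simps)
  have e4: "(norm D)\<^sup>2 = Gr x \<bullet> D - Gr y \<bullet> D"
    by (simp add: D_def power2_norm_eq_inner inner_diff_left)
  have "F y + Gr y \<bullet> (x - y) - (1 / L) * (Gr y \<bullet> D) \<le> F x - (1 / L) * (Gr x \<bullet> D) + L / 2 * ((norm D)\<^sup>2 / L\<^sup>2)"
    using t de e1 e2 e3 by (simp add: e2)
  then have "L * (F y + Gr y \<bullet> (x - y) - (1 / L) * (Gr y \<bullet> D)) \<le> L * (F x - (1 / L) * (Gr x \<bullet> D) + L / 2 * ((norm D)\<^sup>2 / L\<^sup>2))"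
    using L by (intro mult_left_mono) auto
  then have "L * (F y + Gr y \<bullet> (x - y)) - (Gr y \<bullet> D) \<le> L * F x - (Gr x \<bullet> D) + (norm D)\<^sup>2 / 2"
    using L by (simp add: right_diff_distrib distrib_left power2_eq_square)
  then have "(norm D)\<^sup>2 \<le> 2 * (L * F x - L * (F y + Gr y \<bullet> (x - y)))" using e4 by argo
  also have "\<dots> = 2 * L * (F x - F y - Gr y \<bullet> (x - y))"
    by (simp add: algebra_simps)
  finally show ?thesis unfolding D_def .
qed

lemma argmin_quad:
  fixes G z :: "'a::real_inner"
  assumes a: "\<alpha> > 0"
  shows "arg_min (\<lambda>x. G \<bullet> x + \<alpha> / 2 * (norm (x - z))\<^sup>2) (\<lambda>_. True) = z - (1 / \<alpha>) *\<^sub>R G"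
proof -
  define z0 where "z0 = z - (1 / \<alpha>) *\<^sub>R G"
  define q where "q = (\<lambda>x. G \<bullet> x + \<alpha> / 2 * (norm (x - z))\<^sup>2)"
  have id: "q x = q z0 + \<alpha> / 2 * (norm (x - z0))\<^sup>2" for x
  proof -
    define w where "w = x - z0"
    define c where "c = 1 / \<alpha>"
    have xz: "x - z = w - c *\<^sub>R G" by (simp add: z0_def w_def c_def)
    have "(norm (x - z))\<^sup>2 = (w - c *\<^sub>R G) \<bullet> (w - c *\<^sub>R G)"
      by (simp add: xz power2_norm_eq_inner)
    also have "\<dots> = w \<bullet> w - 2 * c * (G \<bullet> w) + c\<^sup>2 * (G \<bullet> G)"
      by (simp add: inner_diff_left inner_diff_right inner_commute power2_eq_square algebra_simps)
    finally have n1: "(norm (x - z))\<^sup>2 = w \<bullet> w - 2 * c * (G \<bullet> w) + c\<^sup>2 * (G \<bullet> G)" .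
    have n2: "(norm (x - z0))\<^sup>2 = w \<bullet> w" by (simp add: w_def power2_norm_eq_inner)
    have n3: "(norm (z0 - z))\<^sup>2 = c\<^sup>2 * (G \<bullet> G)"
      by (simp add: z0_def c_def power_mult_distrib power_divide power2_norm_eq_inner)
    have gx: "G \<bullet> x = G \<bullet> z0 + G \<bullet> w" by (simp add: w_def inner_diff_right)
    have ca: "\<alpha> * c = 1" using a by (simp add: c_def)
    show ?thesis unfolding q_def n1 n2 n3 gx
      using ca by (simp add: algebra_simps power2_eq_square)
  qed
  have uniq: "q x \<le> q z0 \<Longrightarrow> x = z0" for x
  proof -
    assume "q x \<le> q z0"
    then have "\<alpha> * (norm (x - z0))\<^sup>2 \<le> 0" using id[of x] by simp
    then have "(norm (x - z0))\<^sup>2 \<le> 0" using a by (simp add: mult_le_0_iff)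
    then show "x = z0" by simp
  qed
  have "is_arg_min q (\<lambda>_. True) z0" unfolding is_arg_min_def using id
    by (metis add_le_cancel_left mult_nonneg_nonneg not_less zero_le_power2 less_eq_real_def a half_gt_zero_iff le_add_same_cancel1)
  then have "is_arg_min q (\<lambda>_. True) (arg_min q (\<lambda>_. True))"
    unfolding arg_min_def by (rule someI)
  then have "arg_min q (\<lambda>_. True) = z0"
    using uniq unfolding is_arg_min_def by (meson not_less)
  then show ?thesis by (simp add: q_def z0_def)
qed

lemma fin_dist: "n \<ge> 1 \<Longrightarrow> finite (set_pmf (svrg_dist L n g tau p x0 m))"
proof (induction m)
  case 0 then show ?case by simp
next
  case (Suc m)
  have "finite (set_pmf (bernoulli_pmf q))" for q :: real by (rule finite)
  moreover have "0 \<in> {..<n}" using Suc by simp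
  then have "{..<n} \<noteq> {}" by blast
  then have "set_pmf (pmf_of_set {..<n}) = {..<n}" by (simp add: set_pmf_of_set)
  ultimately show ?case using Suc by auto
qed

definition Kexp :: "real \<Rightarrow> nat \<Rightarrow> (nat \<Rightarrow> real ^ 'd \<Rightarrow> real ^ 'd) \<Rightarrow> real \<Rightarrow> real \<Rightarrow>
   ((real ^ 'd) \<times> (real ^ 'd)) \<Rightarrow> (((real ^ 'd) \<times> (real ^ 'd)) \<Rightarrow> real) \<Rightarrow> real" where
  "Kexp L n g t q s h = (\<Sum>i<n. h (svrg_step L n g t s i True) * q + h (svrg_step L n g t s i False) * (1 - q)) / real n"

lemma exp_suc:
  assumes "n \<ge> 1" "0 \<le> p k" "p k \<le> 1"
  shows "measure_pmf.expectation (svrg_dist L n g tau p x0 (Suc k)) h =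
    (\<Sum>s\<in>set_pmf (svrg_dist L n g tau p x0 k). pmf (svrg_dist L n g tau p x0 k) s * Kexp L n g (tau k) (p k) s h)"
proof -
  have fb: "finite (set_pmf (bernoulli_pmf q))" for q :: real by (rule finite)
  have "0 \<in> {..<n}" using assms by simp
  then have ne: "{..<n} \<noteq> {}" by blast
  have inner: "measure_pmf.expectation (pmf_of_set {..<n} \<bind> (\<lambda>i. map_pmf (\<lambda>b. svrg_step L n g (tau k) s i b) (bernoulli_pmf (p k)))) h
     = Kexp L n g (tau k) (p k) s h" for s
    using assms fb ne
    by (subst pmf_expectation_bind_pmf_of_set) (auto simp: Kexp_def sum_divide_distrib field_simps)
  show ?thesis
    apply (simp only: svrg_dist.simps)
    apply (subst pmf_expectation_bind[of "set_pmf (svrg_dist L n g tau p x0 k)"])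
    using fin_dist[of n L g tau p x0 k] fb assms ne
    by (auto simp: inner set_pmf_of_set)
qed

lemma exp_k:
  "n \<ge> 1 \<Longrightarrow> measure_pmf.expectation (svrg_dist L n g tau p x0 k) h =
    (\<Sum>s\<in>set_pmf (svrg_dist L n g tau p x0 k). pmf (svrg_dist L n g tau p x0 k) s * h s)"
  by (subst integral_measure_pmf_real[OF fin_dist]) (auto simp: mult.commute)

lemma scalar_ineq:
  fixes t q L \<alpha> fy fx Z bz bs bY bx ba aa Qa AvgN :: real
  assumes t: "0 < t" "t < 1" and q: "0 < q" "q \<le> 1" and L: "L > 0"
    and al: "\<alpha> = L * t / (1 - t)"
    and avg: "AvgN = Z - 2 / \<alpha> * (bz - bs) + (Qa + 2 * ba - aa) / \<alpha>\<^sup>2"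
    and Qa: "Qa \<le> 2 * L * (fx - fy - bx + bY)"
    and cv: "fy \<le> bY - bs"
    and tz: "t * bz = bY - (1 - t) * bx + (1 - t) / L * ba"
  shows "(1 - t) / (t\<^sup>2 * q) * (q * fy + (1 - q) * fx) + L / 2 * AvgN + (1 - t)\<^sup>2 / (2 * L * t\<^sup>2) * aa
     \<le> (1 - t * q) * (1 - t) / (t\<^sup>2 * q) * fx + L / 2 * Z"
proof -
  have e1: "L / 2 * AvgN = L / 2 * Z - (1 - t) / t * (bz - bs) + (1 - t)\<^sup>2 / (2 * L * t\<^sup>2) * (Qa + 2 * ba - aa)"
    unfolding avg al using t L by (simp add: field_simps power2_eq_square)
  have e2: "(1 - t) / (t\<^sup>2 * q) * (q * fy + (1 - q) * fx) - (1 - t * q) * (1 - t) / (t\<^sup>2 * q) * fx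
      = (1 - t) / t\<^sup>2 * (fy - (1 - t) * fx)"
    using t q by (simp add: field_simps power2_eq_square)
  define B where "B = fy - (1 - t) * fx - t * (bz - bs) + (1 - t) / (2 * L) * (Qa + 2 * ba)"
  have e3: "(1 - t) / t\<^sup>2 * B = (1 - t) / t\<^sup>2 * (fy - (1 - t) * fx) - (1 - t) / t * (bz - bs)
      + (1 - t)\<^sup>2 / (2 * L * t\<^sup>2) * (Qa + 2 * ba)"
    unfolding B_def using t L by (simp add: field_simps power2_eq_square)
  have Qa': "(1 - t) / (2 * L) * Qa \<le> (1 - t) * (fx - fy - bx + bY)"
  proof -
    have "(1 - t) / (2 * L) * Qa \<le> (1 - t) / (2 * L) * (2 * L * (fx - fy - bx + bY))"
      using Qa t L by (intro mult_left_mono) auto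
    also have "\<dots> = (1 - t) * (fx - fy - bx + bY)" using L by simp
    finally show ?thesis .
  qed
  have B1: "B = fy - (1 - t) * fx - (bY - (1 - t) * bx + (1 - t) / L * ba) + t * bs + (1 - t) / (2 * L) * Qa + (1 - t) / L * ba"
  proof -
    have h1: "t * (bz - bs) = (bY - (1 - t) * bx + (1 - t) / L * ba) - t * bs" using tz by (simp add: right_diff_distrib)
    have h2: "(1 - t) / (2 * L) * (Qa + 2 * ba) = (1 - t) / (2 * L) * Qa + (1 - t) / L * ba" using L by (simp add: field_simps)
    show ?thesis unfolding B_def h1 h2 by argo
  qed
  have B2: "B \<le> t * (fy - bY + bs)"
  proof -
    have "B \<le> fy - (1 - t) * fx - (bY - (1 - t) * bx + (1 - t) / L * ba) + t * bs + (1 - t) * (fx - fy - bx + bY) + (1 - t) / L * ba"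
      using B1 Qa' by argo
    also have "\<dots> = t * (fy - bY + bs)" by (simp add: algebra_simps)
    finally show ?thesis .
  qed
  have "t * (fy - bY + bs) \<le> 0" using t cv by (simp add: mult_nonneg_nonpos)
  then have "B \<le> 0" using B2 by linarith
  moreover have "(1 - t) / t\<^sup>2 \<ge> 0" using t by simp
  ultimately have "(1 - t) / t\<^sup>2 * B \<le> 0" by (rule mult_nonneg_nonpos[rotated])
  then show ?thesis using e1 e2 e3 by argo
qed

lemma core:
  fixes n :: nat and L :: real
    and fi :: "nat \<Rightarrow> real ^ 'd \<Rightarrow> real"
    and g :: "nat \<Rightarrow> real ^ 'd \<Rightarrow> real ^ 'd"
    and t q :: real and xs :: "real ^ 'd" and s :: "(real ^ 'd) \<times> (real ^ 'd)"
  assumes n_pos: "n \<ge> 1"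
    and L_pos: "L > 0"
    and grad: "\<And>i x. i < n \<Longrightarrow> (fi i has_derivative (\<lambda>h. g i x \<bullet> h)) (at x)"
    and cvx: "\<And>i. i < n \<Longrightarrow> convex_on UNIV (fi i)"
    and smooth: "\<And>i x y. i < n \<Longrightarrow> norm (g i x - g i y) \<le> L * norm (x - y)"
    and t: "0 < t" "t < 1"
    and q: "0 < q" "q \<le> 1"
  shows "(1 - t) / (t\<^sup>2 * q) * Kexp L n g t q s (\<lambda>s. fsum n fi (snd s) - fsum n fi xs)
    + L / 2 * Kexp L n g t q s (\<lambda>s. (norm (fst s - xs))\<^sup>2)
    + (1 - t)\<^sup>2 / (2 * L * t\<^sup>2) * (norm (gradf n g (snd s)))\<^sup>2
    \<le> (1 - t * q) * (1 - t) / (t\<^sup>2 * q) * (fsum n fi (snd s) - fsum n fi xs)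
    + L / 2 * (norm (fst s - xs))\<^sup>2"
proof -
  obtain z xt where s: "s = (z, xt)" by (cases s)
  define F where "F = fsum n fi"
  define a where "a = gradf n g xt"
  define y where "y = t *\<^sub>R z + (1 - t) *\<^sub>R (xt - (1 / L) *\<^sub>R a)"
  define \<alpha> where "\<alpha> = L * t / (1 - t)"
  define G where "G = (\<lambda>i. g i y - g i xt + a)"
  define z' where "z' = (\<lambda>i. z - (1 / \<alpha>) *\<^sub>R G i)"
  define b where "b = gradf n g y"
  have nn: "real n > 0" using n_pos by simp
  have apos: "\<alpha> > 0" using t L_pos by (simp add: \<alpha>_def)
  have step: "svrg_step L n g t s i c = (z' i, if c then y else xt)" for i c
    unfolding svrg_step_def Let_def s fst_conv snd_conv
    using argmin_quad[OF apos]
    by (simp add: z'_def G_def y_def a_def \<alpha>_def)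
  have K1: "Kexp L n g t q s (\<lambda>s. fsum n fi (snd s) - fsum n fi xs) = q * (F y - F xs) + (1 - q) * (F xt - F xs)"
    unfolding Kexp_def step using nn by (simp add: F_def field_simps)
  have K2: "Kexp L n g t q s (\<lambda>s. (norm (fst s - xs))\<^sup>2) = (\<Sum>i<n. (norm (z' i - xs))\<^sup>2) / real n"
    unfolding Kexp_def step by (simp add: algebra_simps flip: sum_distrib_right)
  define X where "X = (\<lambda>i. g i y - g i xt)"
  define Z where "Z = (norm (z - xs))\<^sup>2"
  have sumg: "(\<Sum>i<n. g i x) = real n *\<^sub>R gradf n g x" for x
    using nn by (simp add: gradf_def)
  have sumf: "(\<Sum>i<n. fi i x) = real n * F x" for x
    using nn by (simp add: F_def fsum_def)
  have F3: "F y + b \<bullet> (xs - y) \<le> F xs"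
  proof -
    have "(\<Sum>i<n. fi i y + g i y \<bullet> (xs - y)) \<le> (\<Sum>i<n. fi i xs)"
      by (rule sum_mono) (use tangent[OF cvx grad] in auto)
    moreover have "(\<Sum>i<n. fi i y + g i y \<bullet> (xs - y)) = real n * (F y + b \<bullet> (xs - y))"
      by (simp add: sum.distrib sumf flip: inner_sum_left) (simp add: sumg b_def distrib_left)
    ultimately have "real n * (F y + b \<bullet> (xs - y)) \<le> real n * F xs" by (simp add: sumf)
    then show ?thesis using nn by simp
  qed
  have Qsum: "(\<Sum>i<n. (norm (X i))\<^sup>2) \<le> 2 * L * (real n * F xt - real n * F y - real n * (b \<bullet> (xt - y)))"
  proof -
    have "(\<Sum>i<n. (norm (X i))\<^sup>2) \<le> (\<Sum>i<n. 2 * L * (fi i xt - fi i y - g i y \<bullet> (xt - y)))"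
    proof (rule sum_mono)
      fix i assume "i \<in> {..<n}"
      then have i: "i < n" by simp
      have "(norm (g i y - g i xt))\<^sup>2 = (norm (g i xt - g i y))\<^sup>2" by (simp add: norm_minus_commute)
      also have "\<dots> \<le> 2 * L * (fi i xt - fi i y - g i y \<bullet> (xt - y))"
        by (rule cocoercive[OF grad[OF i] smooth[OF i] cvx[OF i] L_pos])
      finally show "(norm (X i))\<^sup>2 \<le> 2 * L * (fi i xt - fi i y - g i y \<bullet> (xt - y))" by (simp add: X_def)
    qed
    also have "\<dots> = 2 * L * ((\<Sum>i<n. fi i xt) - (\<Sum>i<n. fi i y) - (\<Sum>i<n. g i y) \<bullet> (xt - y))"
      by (simp add: sum_subtractf inner_sum_left flip: sum_distrib_left)
    also have "\<dots> = 2 * L * (real n * F xt - real n * F y - real n * (b \<bullet> (xt - y)))"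
      by (simp add: sumf sumg b_def)
    finally show ?thesis .
  qed
  have Nexp: "(norm (z' i - xs))\<^sup>2 = Z - 2 / \<alpha> * (G i \<bullet> (z - xs)) + (norm (G i))\<^sup>2 / \<alpha>\<^sup>2" for i
  proof -
    have e: "z' i - xs = (z - xs) - (1 / \<alpha>) *\<^sub>R G i" by (simp add: z'_def)
    have "(norm (z' i - xs))\<^sup>2 = ((z - xs) - (1 / \<alpha>) *\<^sub>R G i) \<bullet> ((z - xs) - (1 / \<alpha>) *\<^sub>R G i)"
      by (simp only: power2_norm_eq_inner e)
    also have "\<dots> = (z - xs) \<bullet> (z - xs) - 2 / \<alpha> * (G i \<bullet> (z - xs)) + (G i \<bullet> G i) / \<alpha>\<^sup>2"
      by (simp add: inner_diff_left inner_diff_right inner_commute power2_eq_square algebra_simps)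
    finally show ?thesis by (simp add: Z_def power2_norm_eq_inner)
  qed
  have Gn: "(norm (G i))\<^sup>2 = (norm (X i))\<^sup>2 + 2 * (X i \<bullet> a) + (norm a)\<^sup>2" for i
  proof -
    have "G i = X i + a" by (simp add: G_def X_def)
    then show ?thesis by (simp add: power2_norm_eq_inner inner_add_left inner_add_right inner_commute)
  qed
  have sumX: "(\<Sum>i<n. X i) = real n *\<^sub>R (b - a)"
    by (simp add: X_def sum_subtractf sumg b_def a_def scaleR_diff_right)
  have sumG: "(\<Sum>i<n. G i) = real n *\<^sub>R b"
  proof -
    have "(\<Sum>i<n. G i) = (\<Sum>i<n. X i) + (\<Sum>i<n. a)" by (simp add: G_def X_def sum.distrib)
    also have "\<dots> = real n *\<^sub>R (b - a) + real n *\<^sub>R a" by (simp add: sumX scaleR_conv_of_real)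
    finally show ?thesis by (simp add: scaleR_diff_right)
  qed
  have sumN: "(\<Sum>i<n. (norm (z' i - xs))\<^sup>2) / real n
      = Z - 2 / \<alpha> * (b \<bullet> z - b \<bullet> xs) + ((\<Sum>i<n. (norm (X i))\<^sup>2) / real n + 2 * (b \<bullet> a) - (norm a)\<^sup>2) / \<alpha>\<^sup>2"
  proof -
    have "(\<Sum>i<n. (norm (z' i - xs))\<^sup>2) = real n * Z - 2 / \<alpha> * ((\<Sum>i<n. G i) \<bullet> (z - xs))
        + ((\<Sum>i<n. (norm (X i))\<^sup>2) + 2 * ((\<Sum>i<n. X i) \<bullet> a) + real n * (norm a)\<^sup>2) / \<alpha>\<^sup>2"
      by (simp add: Nexp Gn sum.distrib sum_subtractf inner_sum_left sum_distrib_left add_divide_distrib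
               flip: sum_divide_distrib)
    also have "\<dots> = real n * (Z - 2 / \<alpha> * (b \<bullet> (z - xs)) + ((\<Sum>i<n. (norm (X i))\<^sup>2) / real n + 2 * (b \<bullet> a) - (norm a)\<^sup>2) / \<alpha>\<^sup>2)"
      using nn apos by (simp add: sumG sumX inner_diff_left power2_norm_eq_inner field_simps)
    finally show ?thesis using nn by (simp add: inner_diff_right)
  qed
  have yrel: "t * (b \<bullet> z) = b \<bullet> y - (1 - t) * (b \<bullet> xt) + (1 - t) / L * (b \<bullet> a)"
    by (simp add: y_def inner_add_right inner_diff_right algebra_simps)
  have Qa: "(\<Sum>i<n. (norm (X i))\<^sup>2) / real n \<le> 2 * L * ((F xt - F xs) - (F y - F xs) - b \<bullet> xt + b \<bullet> y)"
  proof -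
    have "(\<Sum>i<n. (norm (X i))\<^sup>2) \<le> real n * (2 * L * ((F xt - F xs) - (F y - F xs) - b \<bullet> xt + b \<bullet> y))"
      using Qsum by (simp add: inner_diff_right algebra_simps)
    then show ?thesis using nn by (simp add: divide_le_eq mult.commute)
  qed
  have cv: "F y - F xs \<le> b \<bullet> y - b \<bullet> xs" using F3 by (simp add: inner_diff_right)
  note main = scalar_ineq[OF t q L_pos \<alpha>_def sumN Qa cv yrel]
  show ?thesis unfolding K1 K2 using main by (simp add: s a_def Z_def F_def)
qed

theorem proposition2:
  fixes n :: nat and L :: real
    and fi :: "nat \<Rightarrow> real ^ 'd \<Rightarrow> real"
    and g :: "nat \<Rightarrow> real ^ 'd \<Rightarrow> real ^ 'd"
    and tau p :: "nat \<Rightarrow> real"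
    and x0 xs :: "real ^ 'd" and k :: nat
  assumes n_pos: "n \<ge> 1"
    and L_pos: "L > 0"
    and grad: "\<And>i x. i < n \<Longrightarrow> (fi i has_derivative (\<lambda>h. g i x \<bullet> h)) (at x)"
    and cvx: "\<And>i. i < n \<Longrightarrow> convex_on UNIV (fi i)"
    and smooth: "\<And>i x y. i < n \<Longrightarrow> norm (g i x - g i y) \<le> L * norm (x - y)"
    and tau: "\<And>j. 0 < tau j \<and> tau j < 1"
    and p: "\<And>j. 0 < p j \<and> p j \<le> 1"
    and xs_min: "\<And>y. fsum n fi xs \<le> fsum n fi y"
  shows
   "(1 - tau k) / ((tau k)\<^sup>2 * p k) *
      measure_pmf.expectation (svrg_dist L n g tau p x0 (Suc k)) (\<lambda>s. fsum n fi (snd s) - fsum n fi xs)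
    + L / 2 * measure_pmf.expectation (svrg_dist L n g tau p x0 (Suc k)) (\<lambda>s. (norm (fst s - xs))\<^sup>2)
    + (1 - tau k)\<^sup>2 / (2 * L * (tau k)\<^sup>2) *
      measure_pmf.expectation (svrg_dist L n g tau p x0 k) (\<lambda>s. (norm (gradf n g (snd s)))\<^sup>2)
    \<le> (1 - tau k * p k) * (1 - tau k) / ((tau k)\<^sup>2 * p k) *
      measure_pmf.expectation (svrg_dist L n g tau p x0 k) (\<lambda>s. fsum n fi (snd s) - fsum n fi xs)
    + L / 2 * measure_pmf.expectation (svrg_dist L n g tau p x0 k) (\<lambda>s. (norm (fst s - xs))\<^sup>2)"
proof -
  define D where "D = svrg_dist L n g tau p x0 k"
  define S where "S = set_pmf D"
  define c1 where "c1 = (1 - tau k) / ((tau k)\<^sup>2 * p k)"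
  define c3 where "c3 = (1 - tau k)\<^sup>2 / (2 * L * (tau k)\<^sup>2)"
  define c4 where "c4 = (1 - tau k * p k) * (1 - tau k) / ((tau k)\<^sup>2 * p k)"
  define h1 where "h1 = (\<lambda>s::(real ^ 'd) \<times> (real ^ 'd). fsum n fi (snd s) - fsum n fi xs)"
  define h2 where "h2 = (\<lambda>s::(real ^ 'd) \<times> (real ^ 'd). (norm (fst s - xs))\<^sup>2)"
  define h3 where "h3 = (\<lambda>s::(real ^ 'd) \<times> (real ^ 'd). (norm (gradf n g (snd s)))\<^sup>2)"
  have pk: "0 \<le> p k" "p k \<le> 1" using p[of k] by auto
  have tk: "0 < tau k" "tau k < 1" using tau[of k] by auto
  have qk: "0 < p k" "p k \<le> 1" using p[of k] by auto
  have per: "pmf D s * (c1 * Kexp L n g (tau k) (p k) s h1 + L / 2 * Kexp L n g (tau k) (p k) s h2 + c3 * h3 s)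
      \<le> pmf D s * (c4 * h1 s + L / 2 * h2 s)" for s
    using core[OF n_pos L_pos grad cvx smooth tk qk, where xs=xs and s=s]
    unfolding c1_def c3_def c4_def h1_def h2_def h3_def
    by (intro mult_left_mono) auto
  have "(\<Sum>s\<in>S. pmf D s * (c1 * Kexp L n g (tau k) (p k) s h1 + L / 2 * Kexp L n g (tau k) (p k) s h2 + c3 * h3 s))
      \<le> (\<Sum>s\<in>S. pmf D s * (c4 * h1 s + L / 2 * h2 s))"
    by (rule sum_mono) (rule per)
  then have "c1 * (\<Sum>s\<in>S. pmf D s * Kexp L n g (tau k) (p k) s h1) + L / 2 * (\<Sum>s\<in>S. pmf D s * Kexp L n g (tau k) (p k) s h2)
      + c3 * (\<Sum>s\<in>S. pmf D s * h3 s) \<le> c4 * (\<Sum>s\<in>S. pmf D s * h1 s) + L / 2 * (\<Sum>s\<in>S. pmf D s * h2 s)"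
    by (simp add: sum.distrib sum_distrib_left algebra_simps)
  then show ?thesis
    unfolding exp_suc[where p=p and k=k, OF n_pos pk] exp_k[where k=k, OF n_pos]
    unfolding D_def[symmetric] S_def[symmetric] c1_def c3_def c4_def h1_def h2_def h3_def .
qed

end
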